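(* Let $H$ be the three-dimensional Heisenberg group with the left-invariant metric $g$ (parameter $A>0$) and magnetic form $\Omega$ (parameter $B$) of the context, let $\Gamma_1,\Gamma_2<H$ be cocompact lattices, and suppose that for some $E>|B|$ the manifolds $\Gamma_1\backslash H$ and $\Gamma_2\backslash H$ have the same marked magnetic length spectrum at energy $E$. Let $\exp(\bar z_1Z)$ and $\exp(\bar z_2Z)$ be generators of the central lattices $\Gamma_1\cap Z(H)$ and $\Gamma_2\cap Z(H)$ respectively. Then $|\bar z_1|=|\bar z_2|$.
   Context: $H$ is the simply connected Lie group whose Lie algebra has basis $X,Y,Z$ with only nonzero bracket $[X,Y]=Z$; its center is $Z(H)=\exp(\mathbb RZ)$, and for a cocompact lattice $\Gamma$, $\Gamma\cap Z(H)$ is infinite cyclic. $g$ is the left-invariant metric with $\{X/\sqrt A,Y/\sqrt A,Z\}$ orthonormal; with $\{\alpha,\beta,\zeta\}$ the dual basis, $\Omega=d(B\zeta)=-B\alpha\wedge\beta$. Magnetic geodesics are curves with $\nabla_{\sigma'}\sigma'=F\sigma'$, $g(Fu,v)=\Omega(u,v)$, of constant speed $E$ (energy). $\Gamma_i\backslash H$ carries the induced metric and magnetic form; free homotopy classes of closed curves correspond to conjugacy classes of $\Gamma_i\cong\pi_1(\Gamma_i\backslash H)$ and an isomorphism $\phi:\Gamma_1\to\Gamma_2$ induces a bijection $\phi_*$ of free homotopy classes. $L(\mathcal C;E)$ is the set of lengths of smoothly closed magnetic geodesics of energy $E$ in the class $\mathcal C$ (length of one of period $\omega$ is $E|\omega|$).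 Same marked magnetic length spectrum at energy $E$ means there is an isomorphism $\phi:\Gamma_1\to\Gamma_2$ with $L(\phi_*\mathcal C;E)=L(\mathcal C;E)$ for every nontrivial free homotopy class $\mathcal C$. *)

theory Defs
  imports "HOL-Analysis.Analysis"
begin

text \<open>The Heisenberg group H in exponential coordinates:
  the point (a,b,c) is exp(aX + bY + cZ), with [X,Y] = Z.\<close>

type_synonym heis = "real^3"

definition hexp :: "real \<Rightarrow> real \<Rightarrow> real \<Rightarrow> heis" where
  "hexp a b c = (\<chi> i. if i = 1 then a else if i = 2 then b else c)"

text \<open>Group law (Baker-Campbell-Hausdorff), identity 0, inverse -p.\<close>
definition hmul :: "heis \<Rightarrow> heis \<Rightarrow> heis" where
  "hmul p q = hexp (p$1 + q$1) (p$2 + q$2) (p$3 + q$3 + (p$1 * q$2 - q$1 * p$2) / 2)"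

definition hinv :: "heis \<Rightarrow> heis" where
  "hinv p = - p"

definition hcenter :: "heis set" where
  "hcenter = {c. \<forall>h. hmul c h = hmul h c}"

text \<open>Cocompact lattice: discrete subgroup with compact quotient
  (equivalently some compact K with Gamma K = H).\<close>
definition heis_lattice :: "heis set \<Rightarrow> bool" where
  "heis_lattice G \<longleftrightarrow> 0 \<in> G \<and> (\<forall>a\<in>G. \<forall>b\<in>G. hmul a b \<in> G) \<and> (\<forall>a\<in>G. hinv a \<in> G)
     \<and> (\<exists>e>0. \<forall>g\<in>G. norm g < e \<longrightarrow> g = 0)
     \<and> (\<exists>K. compact K \<and> (\<Union>g\<in>G. hmul g ` K) = UNIV)"

text \<open>Coframe (alpha, beta, zeta) dual to the left-invariant frame (X, Y, Z), where in
  coordinates X = d_x - (y/2) d_z, Y = d_y + (x/2) d_z, Z = d_z.\<close>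
definition h_alpha :: "heis \<Rightarrow> heis \<Rightarrow> real" where "h_alpha p u = u$1"
definition h_beta :: "heis \<Rightarrow> heis \<Rightarrow> real" where "h_beta p u = u$2"
definition h_zeta :: "heis \<Rightarrow> heis \<Rightarrow> real" where
  "h_zeta p u = u$3 + (p$2 / 2) * u$1 - (p$1 / 2) * u$2"

definition hg :: "real \<Rightarrow> heis \<Rightarrow> heis \<Rightarrow> heis \<Rightarrow> real" where
  "hg A p u v = A * h_alpha p u * h_alpha p v + A * h_beta p u * h_beta p v
                + h_zeta p u * h_zeta p v"

text \<open>Magnetic form Omega = d(B zeta) = - B alpha /\ beta.\<close>
definition hOmega :: "real \<Rightarrow> heis \<Rightarrow> heis \<Rightarrow> heis \<Rightarrow> real" where
  "hOmega B p u v = - B * (h_alpha p u * h_beta p v - h_alpha p v * h_beta p u)"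

definition gc :: "real \<Rightarrow> heis \<Rightarrow> 3 \<Rightarrow> 3 \<Rightarrow> real" where
  "gc A p i j = hg A p (axis i 1) (axis j 1)"

definition dgc :: "real \<Rightarrow> heis \<Rightarrow> 3 \<Rightarrow> 3 \<Rightarrow> 3 \<Rightarrow> real" where
  "dgc A p k i j = deriv (\<lambda>s. gc A (p + s *\<^sub>R axis k 1) i j) 0"

definition christoffel1 :: "real \<Rightarrow> heis \<Rightarrow> 3 \<Rightarrow> 3 \<Rightarrow> 3 \<Rightarrow> real" where
  "christoffel1 A p l i j = (dgc A p i j l + dgc A p j i l - dgc A p l i j) / 2"

text \<open>Magnetic geodesic of energy E: nabla_{s'} s' = F s' with g(Fu,v) = Omega(u,v),
  i.e. g(nabla_{s'} s', e_l) = Omega(s', e_l) for every coordinate vector e_l,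
  and constant speed E.\<close>
definition mag_geodesic :: "real \<Rightarrow> real \<Rightarrow> real \<Rightarrow> (real \<Rightarrow> heis) \<Rightarrow> bool" where
  "mag_geodesic A B E s \<longleftrightarrow> (\<exists>s' s''. \<forall>t.
      (s has_vector_derivative s' t) (at t) \<and>
      (s' has_vector_derivative s'' t) (at t) \<and>
      sqrt (hg A (s t) (s' t) (s' t)) = E \<and>
      (\<forall>l. (\<Sum>k\<in>UNIV. gc A (s t) l k * s'' t $ k)
           + (\<Sum>i\<in>UNIV. \<Sum>j\<in>UNIV. christoffel1 A (s t) l i j * s' t $ i * s' t $ j)
         = hOmega B (s t) (s' t) (axis l 1)))"

text \<open>Conjugacy class of g in G (= free homotopy class of closed curves in G\H).\<close>
definition conj_class :: "heis set \<Rightarrow> heis \<Rightarrow> heis set" where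
  "conj_class G g = {hmul (hmul d g) (hinv d) | d. d \<in> G}"

text \<open>L(C;E): lengths E*omega of closed magnetic geodesics of energy E (period omega > 0)
  in G\H whose lift satisfies s(t+omega) = d s(t) with deck transformation d in C.\<close>
definition mag_lengths :: "real \<Rightarrow> real \<Rightarrow> real \<Rightarrow> heis set \<Rightarrow> real set" where
  "mag_lengths A B E C = {E * w | w. w > 0 \<and>
      (\<exists>s d. d \<in> C \<and> mag_geodesic A B E s \<and> (\<forall>t. s (t + w) = hmul d (s t)))}"

definition heis_group_iso :: "heis set \<Rightarrow> heis set \<Rightarrow> (heis \<Rightarrow> heis) \<Rightarrow> bool" where
  "heis_group_iso G1 G2 f \<longleftrightarrow> bij_betw f G1 G2 \<and>
      (\<forall>a\<in>G1. \<forall>b\<in>G1. f (hmul a b) = hmul (f a) (f b))"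

definition same_marked_mag_spectrum ::
  "real \<Rightarrow> real \<Rightarrow> real \<Rightarrow> heis set \<Rightarrow> heis set \<Rightarrow> bool" where
  "same_marked_mag_spectrum A B E G1 G2 \<longleftrightarrow> (\<exists>f. heis_group_iso G1 G2 f \<and>
      (\<forall>g\<in>G1. g \<noteq> 0 \<longrightarrow>
         mag_lengths A B E (conj_class G2 (f g)) = mag_lengths A B E (conj_class G1 g)))"

end

theory Submission
  imports Defs
begin


lemma hexp_nth[simp]: "hexp a b c $ 1 = a" "hexp a b c $ 2 = b" "hexp a b c $ 3 = c"
  by (simp_all add: hexp_def)

definition ind :: "3 \<Rightarrow> 3 \<Rightarrow> real" where "ind i j = (if i = j then 1 else 0)"
definition Zc :: "heis \<Rightarrow> 3 \<Rightarrow> real" where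
  "Zc p i = ind i 3 + p$2/2 * ind i 1 - p$1/2 * ind i 2"
definition Dc :: "3 \<Rightarrow> 3 \<Rightarrow> real" where
  "Dc k i = (ind k 2 * ind i 1 - ind k 1 * ind i 2)/2"

lemma gc_expl: "gc A p i j = A * ind i 1 * ind j 1 + A * ind i 2 * ind j 2 + Zc p i * Zc p j"
  by (simp add: gc_def hg_def h_alpha_def h_beta_def h_zeta_def axis_def Zc_def ind_def)

lemma Zc_shift: "Zc (p + s *\<^sub>R axis k 1) i = Zc p i + s * Dc k i"
  by (simp add: Zc_def Dc_def axis_def ind_def algebra_simps)

lemma dgc_expl: "dgc A p k i j = Dc k i * Zc p j + Zc p i * Dc k j"
proof -
  have "((\<lambda>s. gc A (p + s *\<^sub>R axis k 1) i j) has_field_derivative (Dc k i * Zc p j + Zc p i * Dc k j)) (at 0)"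
    unfolding gc_expl Zc_shift
    by (auto intro!: derivative_eq_intros)
  then show ?thesis unfolding dgc_def by (rule DERIV_imp_deriv)
qed

lemma sum3: "sum f (UNIV::3 set) = f 1 + f 2 + f 3"
  by (rule sum_3)

definition ELx where "ELx A p v a l =
   (\<Sum>k\<in>UNIV. gc A p l k * a $ k) + (\<Sum>i\<in>UNIV. \<Sum>j\<in>UNIV. christoffel1 A p l i j * v $ i * v $ j)"

lemma EL_expl:
  shows "ELx A p v a 1 = A * a$1 + p$2/2 * (a$3 + (p$2 * a$1 - p$1 * a$2)/2) + (v$3 + (p$2 * v$1 - p$1 * v$2)/2) * v$2"
    "ELx A p v a 2 = A * a$2 - p$1/2 * (a$3 + (p$2 * a$1 - p$1 * a$2)/2) - (v$3 + (p$2 * v$1 - p$1 * v$2)/2) * v$1"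
    "ELx A p v a 3 = a$3 + (p$2 * a$1 - p$1 * a$2)/2"
  unfolding ELx_def christoffel1_def dgc_expl sum3 gc_expl
  by (simp_all add: Zc_def Dc_def ind_def algebra_simps field_simps)

lemma Om_expl: "hOmega B p v (axis 1 1) = B * v$2" "hOmega B p v (axis 2 1) = - B * v$1"
   "hOmega B p v (axis 3 1) = 0"
  by (simp_all add: hOmega_def h_alpha_def h_beta_def axis_def)

lemma hg_expl: "hg A p v v = A * (v$1)^2 + A * (v$2)^2 + (v$3 + (p$2 * v$1 - p$1 * v$2)/2)^2"
  unfolding hg_def h_alpha_def h_beta_def h_zeta_def power2_eq_square
  by (simp add: divide_simps) (simp add: algebra_simps)


lemma three_cases: "(P::3 \<Rightarrow> bool) 1 \<Longrightarrow> P 2 \<Longrightarrow> P 3 \<Longrightarrow> P i"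
  using exhaust_3[of i] by auto

lemma hexp_axis: "hexp a b c = a *\<^sub>R axis 1 1 + b *\<^sub>R axis 2 1 + c *\<^sub>R axis 3 1"
  unfolding vec_eq_iff
  by (intro allI, rule_tac i=i in three_cases) (simp_all add: axis_def)

lemma hexp_vderiv:
  assumes "(f has_real_derivative f') F" "(g has_real_derivative g') F" "(h has_real_derivative h') F"
  shows "((\<lambda>t. hexp (f t) (g t) (h t)) has_vector_derivative hexp f' g' h') F"
  unfolding hexp_axis
  using assms unfolding has_real_derivative_iff_has_vector_derivative
  by (intro has_vector_derivative_add bounded_linear.has_vector_derivative[OF bounded_linear_scaleR_left])

lemma comp_deriv:
  assumes "(s has_vector_derivative v) F"
  shows "((\<lambda>t. s t $ i) has_real_derivative v $ i) F"
  unfolding has_real_derivative_iff_has_vector_derivative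
  by (rule bounded_linear.has_vector_derivative[OF bounded_linear_vec_nth assms])

lemma mag_geodesic_iff: "mag_geodesic A B E s \<longleftrightarrow> (\<exists>s' s''. \<forall>t.
      (s has_vector_derivative s' t) (at t) \<and>
      (s' has_vector_derivative s'' t) (at t) \<and>
      sqrt (hg A (s t) (s' t) (s' t)) = E \<and>
      (\<forall>l. ELx A (s t) (s' t) (s'' t) l = hOmega B (s t) (s' t) (axis l 1)))"
  unfolding mag_geodesic_def ELx_def by simp

lemma all3: "(\<forall>l::3. P l) \<longleftrightarrow> P 1 \<and> P 2 \<and> P 3"
  using three_cases by blast

definition helix :: "real \<Rightarrow> real \<Rightarrow> real \<Rightarrow> real \<Rightarrow> heis" where
  "helix R w k t = hexp (R * sin (w * t)) (R * cos (w * t)) (k * t)"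

lemma helix_d1: "(helix R w k has_vector_derivative hexp (R * w * cos (w * t)) (- R * w * sin (w * t)) k) (at t)"
    unfolding helix_def
    by (rule hexp_vderiv) (auto intro!: derivative_eq_intros)

lemma helix_d2: "((\<lambda>t. hexp (R * w * cos (w * t)) (- R * w * sin (w * t)) k) has_vector_derivative 
         hexp (- R * w^2 * sin (w * t)) (- R * w^2 * cos (w * t)) 0) (at t)"
    by (rule hexp_vderiv) (auto intro!: derivative_eq_intros simp: power2_eq_square)

lemma helix_pt:
  assumes "E > 0" "A * (R * w)^2 + (k + R^2 * w / 2)^2 = E^2"
    "R = 0 \<or> A * w = B - (k + R^2 * w / 2)"
  shows "sqrt (hg A (helix R w k t) (hexp (R * w * cos (w * t)) (- R * w * sin (w * t)) k)
           (hexp (R * w * cos (w * t)) (- R * w * sin (w * t)) k)) = E \<and>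
   (\<forall>l. ELx A (helix R w k t) (hexp (R * w * cos (w * t)) (- R * w * sin (w * t)) k)
          (hexp (- R * w^2 * sin (w * t)) (- R * w^2 * cos (w * t)) 0) l =
         hOmega B (helix R w k t) (hexp (R * w * cos (w * t)) (- R * w * sin (w * t)) k) (axis l 1))"
proof
  have sc: "(sin (w*t))^2 + (cos (w*t))^2 = 1" by simp
  have ze: "k + (R * cos (w * t) * (R * w * cos (w * t)) - R * sin (w * t) * (- R * w * sin (w * t))) / 2
     = k + R^2 * w / 2"
  proof -
    have "R * cos (w * t) * (R * w * cos (w * t)) - R * sin (w * t) * (- R * w * sin (w * t))
       = R^2 * w * ((sin (w*t))^2 + (cos (w*t))^2)" by algebra
    then show ?thesis using sc by simp
  qed
  have "hg A (helix R w k t) (hexp (R * w * cos (w * t)) (- R * w * sin (w * t)) k)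
           (hexp (R * w * cos (w * t)) (- R * w * sin (w * t)) k) = 
     A * (R * w)^2 + (k + R^2 * w / 2)^2"
  proof -
    have h1: "A * (R * w * cos (w * t))^2 + A * (- R * w * sin (w * t))^2 = A * (R * w)^2 * ((sin (w*t))^2 + (cos (w*t))^2)"
      by algebra
    show ?thesis unfolding hg_expl helix_def hexp_nth ze h1 sc by simp
  qed
  also have "\<dots> = E^2" using assms(2) by simp
  finally show "sqrt (hg A (helix R w k t) (hexp (R * w * cos (w * t)) (- R * w * sin (w * t)) k)
           (hexp (R * w * cos (w * t)) (- R * w * sin (w * t)) k)) = E"
    using assms(1) by simp
  show "\<forall>l. ELx A (helix R w k t) (hexp (R * w * cos (w * t)) (- R * w * sin (w * t)) k)
          (hexp (- R * w^2 * sin (w * t)) (- R * w^2 * cos (w * t)) 0) l =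
         hOmega B (helix R w k t) (hexp (R * w * cos (w * t)) (- R * w * sin (w * t)) k) (axis l 1)"
  proof -
    have zd: "0 + (R * cos (w * t) * (- R * w\<^sup>2 * sin (w * t)) - R * sin (w * t) * (- R * w\<^sup>2 * cos (w * t))) / 2 = 0"
      by algebra
    have key: "A * w * R + (k + R^2 * w / 2) * R = B * R"
      using assms(3) by (auto simp: algebra_simps)
    have e1: "A * (- R * w\<^sup>2 * sin (w * t)) + (k + R^2 * w / 2) * (- R * w * sin (w * t)) = B * (- R * w * sin (w * t))"
      using key[THEN arg_cong[where f="\<lambda>x. - x * w * sin (w*t)"]] by (simp add: algebra_simps power2_eq_square)
    have e2: "A * (- R * w\<^sup>2 * cos (w * t)) - (k + R^2 * w / 2) * (R * w * cos (w * t)) = - B * (R * w * cos (w * t))"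
      using key[THEN arg_cong[where f="\<lambda>x. - x * w * cos (w*t)"]] by (simp add: algebra_simps power2_eq_square)
    show ?thesis
      unfolding all3 EL_expl Om_expl helix_def hexp_nth ze zd using e1 e2 by simp
  qed
qed

lemma helix_geo:
  assumes "E > 0" "A * (R * w)^2 + (k + R^2 * w / 2)^2 = E^2"
    "R = 0 \<or> A * w = B - (k + R^2 * w / 2)"
  shows "mag_geodesic A B E (helix R w k)"
  unfolding mag_geodesic_iff
  apply (rule exI[of _ "\<lambda>t. hexp (R * w * cos (w * t)) (- R * w * sin (w * t)) k"],
    rule exI[of _ "\<lambda>t. hexp (- R * w^2 * sin (w * t)) (- R * w^2 * cos (w * t)) 0"])
  apply (intro allI conjI)
  subgoal for t by (rule helix_d1)
  subgoal for t using helix_d2[of R w k t] by simp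
  subgoal for t using helix_pt[OF assms, of t] by simp
  subgoal for t using helix_pt[OF assms, of t] by simp
  done


lemma hmul_nth[simp]: "hmul p q $ 1 = p$1 + q$1" "hmul p q $ 2 = p$2 + q$2"
  "hmul p q $ 3 = p$3 + q$3 + (p$1 * q$2 - q$1 * p$2) / 2"
  by (simp_all add: hmul_def)

lemma periodic_deriv:
  assumes "\<And>t. f (t + W) = f t" "\<And>t. (f has_real_derivative f' t) (at t)"
  shows "f' (t + W) = f' t"
proof -
  have "((\<lambda>t. f (t + W)) has_real_derivative f' (t + W)) (at t)"
    using assms(2)[of "t + W"] by (simp add: DERIV_shift)
  then have "(f has_real_derivative f' (t + W)) (at t)" using assms(1) by simp
  then show ?thesis using assms(2) DERIV_unique by blast
qed

lemma const_deriv0: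
  assumes "\<And>t. (f has_real_derivative 0) (at t)" shows "f t = f 0"
  using DERIV_isconst_all assms by blast

lemma rot_fix: "(a::real) = a * C + b * Sn \<Longrightarrow> b = b * C - a * Sn \<Longrightarrow> (a^2 + b^2) * (1 - C) = 0"
  by algebra

lemma closed_analysis:
  assumes A: "A > 0" and EB: "E > \<bar>B\<bar>" and g: "mag_geodesic A B E s" and W: "W > 0"
    and per: "\<forall>t. s (t + W) = hmul (hexp 0 0 z) (s t)"
  shows "E * W = \<bar>z\<bar> \<or> (\<exists>N::nat. N \<ge> 1 \<and> (\<exists>d. 0 < d \<and> d < E + \<bar>B\<bar> \<and> W * d = 2*pi*A*N
      \<and> \<bar>z\<bar> = W * (d^2 + E^2 - B^2) / (2*d)))"
proof -
  from g obtain s' s'' where H: "\<forall>t. (s has_vector_derivative s' t) (at t) \<and>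
      (s' has_vector_derivative s'' t) (at t) \<and>
      sqrt (hg A (s t) (s' t) (s' t)) = E \<and>
      (\<forall>l. ELx A (s t) (s' t) (s'' t) l = hOmega B (s t) (s' t) (axis l 1))"
    unfolding mag_geodesic_iff by blast
  define x where "x = (\<lambda>t. s t $ 1)"
  define y where "y = (\<lambda>t. s t $ 2)"
  define zz where "zz = (\<lambda>t. s t $ 3)"
  define x' where "x' = (\<lambda>t. s' t $ 1)"
  define y' where "y' = (\<lambda>t. s' t $ 2)"
  define zz' where "zz' = (\<lambda>t. s' t $ 3)"
  define x'' where "x'' = (\<lambda>t. s'' t $ 1)"
  define y'' where "y'' = (\<lambda>t. s'' t $ 2)"
  define zz'' where "zz'' = (\<lambda>t. s'' t $ 3)"
  have dx: "\<And>t. (x has_real_derivative x' t) (at t)"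
    unfolding x_def x'_def using H comp_deriv by blast
  have dy: "\<And>t. (y has_real_derivative y' t) (at t)"
    unfolding y_def y'_def using H comp_deriv by blast
  have dz: "\<And>t. (zz has_real_derivative zz' t) (at t)"
    unfolding zz_def zz'_def using H comp_deriv by blast
  have dx': "\<And>t. (x' has_real_derivative x'' t) (at t)"
    unfolding x''_def x'_def using H comp_deriv by blast
  have dy': "\<And>t. (y' has_real_derivative y'' t) (at t)"
    unfolding y''_def y'_def using H comp_deriv by blast
  have dz': "\<And>t. (zz' has_real_derivative zz'' t) (at t)"
    unfolding zz''_def zz'_def using H comp_deriv by blast
  have e1: "A * x'' t + y t / 2 * (zz'' t + (y t * x'' t - x t * y'' t)/2)
       + (zz' t + (y t * x' t - x t * y' t)/2) * y' t = B * y' t" for t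
    using H[rule_format, of t] unfolding all3 EL_expl Om_expl x_def y_def zz_def x'_def y'_def zz'_def
      x''_def y''_def zz''_def by blast
  have e2: "A * y'' t - x t / 2 * (zz'' t + (y t * x'' t - x t * y'' t)/2)
       - (zz' t + (y t * x' t - x t * y' t)/2) * x' t = - B * x' t" for t
    using H[rule_format, of t] unfolding all3 EL_expl Om_expl x_def y_def zz_def x'_def y'_def zz'_def
      x''_def y''_def zz''_def by blast
  have e3: "zz'' t + (y t * x'' t - x t * y'' t)/2 = 0" for t
    using H[rule_format, of t] unfolding all3 EL_expl Om_expl x_def y_def zz_def x'_def y'_def zz'_def
      x''_def y''_def zz''_def by blast
  have sp0: "sqrt (A * (x' t)^2 + A * (y' t)^2 + (zz' t + (y t * x' t - x t * y' t)/2)^2) = E" for t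
    using H[rule_format, of t] unfolding hg_expl x_def y_def zz_def x'_def y'_def zz'_def by simp
  have Epos: "E > 0" using EB by linarith
  have sp: "A * (x' t)^2 + A * (y' t)^2 + (zz' t + (y t * x' t - x t * y' t)/2)^2 = E^2" for t
  proof -
    have "A * (x' t)^2 + A * (y' t)^2 + (zz' t + (y t * x' t - x t * y' t)/2)^2 \<ge> 0"
      using A by (intro add_nonneg_nonneg) auto
    then show ?thesis using sp0[of t] Epos by (metis real_sqrt_pow2 power2_eq_square)
  qed
  define ze where "ze = (\<lambda>t. zz' t + (y t * x' t - x t * y' t)/2)"
  have dze: "(ze has_real_derivative 0) (at t)" for t
  proof -
    have "(ze has_real_derivative (zz'' t + (y' t * x' t + y t * x'' t - (x' t * y' t + x t * y'' t))/2)) (at t)"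
      unfolding ze_def by (auto intro!: derivative_eq_intros dx dy dx' dy' dz')
    moreover have "zz'' t + (y' t * x' t + y t * x'' t - (x' t * y' t + x t * y'' t))/2 = 0"
      using e3[of t] by (simp add: algebra_simps)
    ultimately show ?thesis by simp
  qed
  define c where "c = ze 0"
  have zec: "ze t = c" for t unfolding c_def using const_deriv0 dze by blast
  define om where "om = (B - c) / A"
  have zec': "zz' t + (y t * x' t - x t * y' t)/2 = c" for t using zec[of t] unfolding ze_def by simp
  have xdd: "x'' t = om * y' t" for t
  proof -
    have "A * x'' t + c * y' t = B * y' t" using e1[of t] unfolding e3 zec' by simp
    then show ?thesis using A unfolding om_def by (simp add: field_simps)
  qed
  have ydd: "y'' t = - om * x' t" for t
  proof -
    have "A * y'' t - c * x' t = - B * x' t" using e2[of t] unfolding e3 zec' by simp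
    then show ?thesis using A unfolding om_def by (simp add: field_simps)
  qed
  define S where "S = (E^2 - c^2) / A"
  have Sdef: "(x' t)^2 + (y' t)^2 = S" for t
    using sp[of t] A unfolding zec' S_def by (simp add: field_simps)
  have px: "x (t + W) = x t" for t using per unfolding x_def by simp
  have py: "y (t + W) = y t" for t using per unfolding y_def by simp
  have pz: "zz (t + W) = zz t + z" for t using per unfolding zz_def by simp
  have px': "x' (t + W) = x' t" for t by (rule periodic_deriv[OF px dx])
  have py': "y' (t + W) = y' t" for t by (rule periodic_deriv[OF py dy])
  have zd1: "zz' t = c - (y t * x' t - x t * y' t)/2" for t using zec'[of t] by simp
  show ?thesis
  proof (cases "S = 0")
    case True
    have x0: "x' t = 0" and y0: "y' t = 0" for t using Sdef[of t] True by (simp_all add: sum_power2_eq_zero_iff)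
    have "(zz has_real_derivative c) (at t)" for t using dz[of t] zd1[of t] x0[of t] y0[of t] by simp
    then have "zz W - zz 0 = (W - 0) * c" using W by (intro DERIV_const_ratio_const) auto
    then have zW: "z = W * c" using pz[of 0] by simp
    have "E^2 - c^2 = 0" using True A unfolding S_def by simp
    then have "\<bar>c\<bar>^2 = E^2" by simp
    then have "\<bar>c\<bar> = E" using Epos power2_eq_iff_nonneg[of "\<bar>c\<bar>" E] by simp
    then show ?thesis using zW W by (simp add: abs_mult)
  next
    case False
    have "S \<ge> 0" unfolding Sdef[of 0, symmetric] by simp
    then have Spos: "S > 0" using False by linarith
    have cE: "c^2 < E^2" using Spos A unfolding S_def by (simp add: field_simps)
    show ?thesis
    proof (cases "om = 0")
      case True
      have xk: "x' t = x' 0" for t by (rule const_deriv0) (use dx' xdd True in simp)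
      have "(x has_real_derivative x' 0) (at t)" for t using dx[of t] xk[of t] by simp
      then have "x W - x 0 = (W - 0) * x' 0" using W by (intro DERIV_const_ratio_const) auto
      then have x00: "x' 0 = 0" using px[of 0] W by simp
      have yk: "y' t = y' 0" for t by (rule const_deriv0) (use dy' ydd True in simp)
      have "(y has_real_derivative y' 0) (at t)" for t using dy[of t] yk[of t] by simp
      then have "y W - y 0 = (W - 0) * y' 0" using W by (intro DERIV_const_ratio_const) auto
      then have "y' 0 = 0" using py[of 0] W by simp
      then show ?thesis using x00 Sdef[of 0] False by simp
    next
      case omnz: False
      define u where "u = (\<lambda>t. x' 0 * cos (om * t) + y' 0 * sin (om * t))"
      define v where "v = (\<lambda>t. y' 0 * cos (om * t) - x' 0 * sin (om * t))"
      have du: "(u has_real_derivative om * v t) (at t)" for t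
        unfolding u_def v_def by (auto intro!: derivative_eq_intros simp: algebra_simps)
      have dv: "(v has_real_derivative - om * u t) (at t)" for t
        unfolding u_def v_def by (auto intro!: derivative_eq_intros simp: algebra_simps)
      define e where "e = (\<lambda>t. (x' t - u t)^2 + (y' t - v t)^2)"
      have de: "(e has_real_derivative 0) (at t)" for t
      proof -
        have "(e has_real_derivative (2 * (x' t - u t) * (x'' t - om * v t) + 2 * (y' t - v t) * (y'' t - - om * u t))) (at t)"
          unfolding e_def by (auto intro!: derivative_eq_intros dx' dy' du dv simp: power2_eq_square algebra_simps)
        moreover have "2 * (x' t - u t) * (x'' t - om * v t) + 2 * (y' t - v t) * (y'' t - - om * u t) = 0"
          unfolding xdd ydd by (simp add: algebra_simps)
        ultimately show ?thesis by simp
      qed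
      have "e t = e 0" for t by (rule const_deriv0[of e, OF de])
      moreover have "e 0 = 0" unfolding e_def u_def v_def by simp
      ultimately have "e t = 0" for t by simp
      then have xu: "x' t = u t" and yv: "y' t = v t" for t unfolding e_def by (simp_all add: sum_power2_eq_zero_iff)
      have c1: "x' 0 = x' 0 * cos (om * W) + y' 0 * sin (om * W)" using px'[of 0] xu[of W] unfolding u_def by simp
      have c2: "y' 0 = y' 0 * cos (om * W) - x' 0 * sin (om * W)" using py'[of 0] yv[of W] unfolding v_def by simp
      have "(x' 0^2 + y' 0^2) * (1 - cos (om * W)) = 0"
        by (rule rot_fix[OF c1 c2])
      then have "cos (om * W) = 1" using Sdef[of 0] False by simp
      then obtain m :: int where m: "om * W = of_int m * 2 * pi" using cos_one_2pi_int by blast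
      have mnz: "m \<noteq> 0" using m omnz W by auto
      define Xc where "Xc = x 0 + y' 0 / om"
      define Yc where "Yc = y 0 - x' 0 / om"
      have dX: "((\<lambda>t. x t + y' t / om) has_real_derivative x' t + y'' t / om) (at t)" for t
        using omnz by (auto intro!: derivative_eq_intros dx dy')
      have "((\<lambda>t. x t + y' t / om) has_real_derivative 0) (at t)" for t
        using dX[of t] ydd[of t] omnz by simp
      then have "x t + y' t / om = x 0 + y' 0 / om" for t by (rule const_deriv0[of "\<lambda>t. x t + y' t / om"])
      then have xc: "x t = Xc - y' t / om" for t unfolding Xc_def by (simp add: algebra_simps)
      have dY: "((\<lambda>t. y t - x' t / om) has_real_derivative y' t - x'' t / om) (at t)" for t
        using omnz by (auto intro!: derivative_eq_intros dy dx')
      have "((\<lambda>t. y t - x' t / om) has_real_derivative 0) (at t)" for t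
        using dY[of t] xdd[of t] omnz by simp
      then have "y t - x' t / om = y 0 - x' 0 / om" for t by (rule const_deriv0[of "\<lambda>t. y t - x' t / om"])
      then have yc: "y t = Yc + x' t / om" for t unfolding Yc_def by (simp add: algebra_simps)
      define F where "F = (\<lambda>t. zz t - c * t - (Xc * y t - Yc * x t) / 2 + S * t / (2 * om))"
      have "(F has_real_derivative zz' t - c - (Xc * y' t - Yc * x' t)/2 + S / (2 * om)) (at t)" for t
        unfolding F_def using omnz by (auto intro!: derivative_eq_intros dz dy dx)
      moreover have "zz' t - c - (Xc * y' t - Yc * x' t)/2 + S / (2 * om) = 0" for t
      proof -
        have h: "zz' t = c - ((Yc + x' t / om) * x' t - (Xc - y' t / om) * y' t)/2"
          using zd1[of t] unfolding xc[of t, symmetric] yc[of t, symmetric] .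
        have "c - ((Yc + x' t / om) * x' t - (Xc - y' t / om) * y' t)/2 - c - (Xc * y' t - Yc * x' t)/2
           + ((x' t)^2 + (y' t)^2) / (2 * om) = 0" using omnz
          by (simp add: field_simps power2_eq_square)
        then show ?thesis unfolding Sdef[of t, symmetric] h .
      qed
      ultimately have "F W = F 0" by (intro const_deriv0[of F]) simp
      then have zf: "z = W * (c - S / (2 * om))"
        using pz[of 0] px[of 0] py[of 0] omnz unfolding F_def by (simp add: field_simps)
      have Bc: "B - c \<noteq> 0" using omnz unfolding om_def by simp
      have cabs: "\<bar>c\<bar> < E"
      proof (rule ccontr)
        assume "\<not> \<bar>c\<bar> < E"
        then have "\<bar>E\<bar> \<le> \<bar>c\<bar>" using Epos by simp
        then have "E^2 \<le> c^2" by (simp add: abs_le_square_iff)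
        then show False using cE by simp
      qed
      have zf2: "z = - W * ((B - c)^2 + E^2 - B^2) / (2 * (B - c))"
        unfolding zf S_def om_def using A Bc by (simp add: field_simps power2_eq_square)
      have pos: "(B - c)^2 + E^2 - B^2 > 0"
      proof -
        have "\<not> \<bar>E\<bar> \<le> \<bar>B\<bar>" using EB Epos by simp
        then have "B^2 < E^2" by (simp add: abs_le_square_iff)
        moreover have "(B - c)^2 \<ge> 0" by simp
        ultimately show ?thesis by linarith
      qed
      have f1: "real (nat \<bar>m\<bar>) \<ge> 1" using mnz by simp
      have f2: "0 < \<bar>B - c\<bar>" using Bc by simp
      have f3: "\<bar>B - c\<bar> < E + \<bar>B\<bar>" using cabs by linarith
      have "\<bar>om\<bar> * W = \<bar>m\<bar> * 2 * pi" using arg_cong[OF m, of abs] W by (simp add: abs_mult)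
      then have f4: "W * \<bar>B - c\<bar> = 2 * pi * A * real (nat \<bar>m\<bar>)"
        using A unfolding om_def by (simp add: abs_divide field_simps)
      have f5: "\<bar>z\<bar> = W * (\<bar>B - c\<bar>^2 + E^2 - B^2) / (2 * \<bar>B - c\<bar>)"
      proof -
        have "\<bar>2 * B - 2 * c\<bar> = 2 * \<bar>B - c\<bar>" by (auto simp: abs_if)
        then show ?thesis unfolding zf2 using W pos by (simp add: abs_divide abs_mult)
      qed
      show ?thesis using f1 f2 f3 f4 f5 by blast
    qed
  qed
qed



lemma lb_arith:
  fixes A B E a W d n :: real
  assumes A: "A > 0" and EB: "E > \<bar>B\<bar>" and n: "n \<ge> 1" and d: "0 < d" "d < E + \<bar>B\<bar>"
    and Wd: "W * d = 2 * pi * A * n" and a: "a = W * (d^2 + E^2 - B^2) / (2 * d)"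
    and big: "a \<ge> 2 * E * (pi * A) / (E - \<bar>B\<bar>)"
  shows "(E * W)^2 \<ge> 4 * E^2 * (pi * A) * (a - pi * A) / (E^2 - B^2)"
proof -
  define u where "u = pi * A"
  define K where "K = E^2 - B^2"
  define b where "b = \<bar>B\<bar>"
  have u: "u > 0" unfolding u_def using A by simp
  have b: "b \<ge> 0" "E > b" unfolding b_def using EB by auto
  have Kb: "K = (E - b) * (E + b)" unfolding K_def b_def by (simp add: power2_eq_square algebra_simps)
  have K: "K > 0" unfolding Kb using b by simp
  have Wd': "W * d = 2 * u * n" using Wd unfolding u_def by simp
  have h2: "a * d^2 = u * n * (d^2 + K)"
  proof -
    have "a * (2 * d) = W * (d^2 + K)" using a d unfolding K_def by (simp add: field_simps)
    then have "a * (2 * d) * d = (W * d) * (d^2 + K)" by (simp add: algebra_simps)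
    then show ?thesis unfolding Wd' by (simp add: power2_eq_square algebra_simps)
  qed
  have key: "(n - 1) * (n * K - d^2) \<ge> 0"
  proof (cases "n * K \<ge> d^2")
    case True then show ?thesis using n by simp
  next
    case False
    show ?thesis
    proof (cases "n = 1")
      case True then show ?thesis by simp
    next
      case n1: False
      have lt: "n * K < d^2" using False by simp
      have "a * d^2 < u * (n + 1) * d^2"
      proof -
        have "u * n * K < u * d^2" using lt u by (simp add: mult.assoc)
        then show ?thesis unfolding h2 by (simp add: algebra_simps)
      qed
      then have a1: "a < u * (n + 1)" using d by simp
      have "d^2 < (E + b)^2" using d b_def by (simp add: power_strict_mono)
      then have "n * (E - b) * (E + b) < (E + b) * (E + b)" using lt unfolding Kb by (simp add: power2_eq_square algebra_simps)
      then have n2: "n * (E - b) < E + b" using b by simp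
      have "a * (E - b) < u * (n + 1) * (E - b)" using a1 b by simp
      also have "\<dots> = u * (n * (E - b) + (E - b))" by (simp add: algebra_simps)
      also have "\<dots> < u * (2 * E)" using n2 u by simp
      finally have "a * (E - b) < 2 * E * u" by (simp add: algebra_simps)
      moreover have "a * (E - b) \<ge> 2 * E * u" using big b unfolding u_def b_def by (simp add: field_simps)
      ultimately show ?thesis by simp
    qed
  qed
  have step: "u * n^2 * K \<ge> (a - u) * d^2"
  proof -
    have "(a - u) * d^2 = u * n * d^2 + u * n * K - u * d^2" using h2 by (simp add: algebra_simps)
    moreover have "u * n^2 * K - (u * n * d^2 + u * n * K - u * d^2) = u * ((n - 1) * (n * K - d^2))"
      by (simp add: algebra_simps power2_eq_square)
    moreover have "u * ((n - 1) * (n * K - d^2)) \<ge> 0" using u key by simp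
    ultimately show ?thesis by linarith
  qed
  have "(E * W)^2 * K * d^2 = E^2 * (W * d)^2 * K" by (simp add: power2_eq_square algebra_simps)
  also have "\<dots> = 4 * E^2 * u * (u * n^2 * K)" unfolding Wd' by (simp add: power2_eq_square algebra_simps)
  also have "\<dots> \<ge> 4 * E^2 * u * ((a - u) * d^2)" using step u by (intro mult_left_mono) auto
  finally have "(E * W)^2 * K * d^2 \<ge> 4 * E^2 * u * (a - u) * d^2" by (simp add: algebra_simps)
  then have "(E * W)^2 * K \<ge> 4 * E^2 * u * (a - u)" using d by simp
  then show ?thesis using K unfolding u_def K_def by (simp add: field_simps)
qed

lemma EB_sq: "E > \<bar>B\<bar> \<Longrightarrow> E^2 - B^2 > (0::real)"
proof -
  assume h: "E > \<bar>B\<bar>"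
  have "\<bar>B\<bar>^2 < E^2" using h by (intro power_strict_mono) auto
  then show ?thesis by simp
qed

lemma vert_arith:
  fixes A B E a :: real
  assumes A: "A > 0" and EB: "E > \<bar>B\<bar>" and big: "a \<ge> 4 * E^2 * (pi * A) / (E^2 - B^2)"
  shows "a^2 \<ge> 4 * E^2 * (pi * A) * (a - pi * A) / (E^2 - B^2)"
proof -
  have K: "E^2 - B^2 > 0" using EB by (rule EB_sq)
  have u: "pi * A > 0" using A by simp
  have a: "a * (E^2 - B^2) \<ge> 4 * E^2 * (pi * A)" using big K by (simp add: field_simps)
  have Ep: "E > 0" using EB by linarith
  have p: "4 * E^2 * (pi * A) > 0" using u Ep by simp
  have apos: "a > 0"
  proof (rule ccontr)
    assume "\<not> a > 0"
    then have "a * (E^2 - B^2) \<le> 0" using K by (simp add: mult_nonpos_nonneg)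
    then show False using a p by linarith
  qed
  have "a^2 * (E^2 - B^2) = a * (a * (E^2 - B^2))" by (simp add: power2_eq_square)
  also have "\<dots> \<ge> a * (4 * E^2 * (pi * A))" using a apos by (intro mult_left_mono) auto
  finally have h1: "a^2 * (E^2 - B^2) \<ge> a * (4 * E^2 * (pi * A))" .
  have "4 * E^2 * (pi * A) * (a - pi * A) = a * (4 * E^2 * (pi * A)) - 4 * E^2 * (pi * A) * (pi * A)"
    by (simp add: algebra_simps)
  moreover have "4 * E^2 * (pi * A) * (pi * A) \<ge> 0" using p u by simp
  ultimately have "a^2 * (E^2 - B^2) \<ge> 4 * E^2 * (pi * A) * (a - pi * A)" using h1 by linarith
  then show ?thesis using K by (simp add: field_simps)
qed



lemma cos_int2pi: "cos (of_int m * 2 * pi) = 1"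
  using cos_one_2pi_int by blast

lemma sin_int2pi: "sin (of_int m * 2 * pi) = 0"
  using sin_int_2pin[of m] by (simp add: mult.commute mult.left_commute)

lemma helix_per:
  assumes "R = 0 \<or> (\<exists>m::int. w * W = of_int m * 2 * pi)" "k * W = z"
  shows "helix R w k (t + W) = hmul (hexp 0 0 z) (helix R w k t)"
proof (cases "R = 0")
  case True
  then show ?thesis unfolding helix_def hmul_def using assms(2) by (simp add: algebra_simps)
next
  case False
  then obtain m :: int where m: "w * W = of_int m * 2 * pi" using assms(1) by blast
  have "sin (w * (t + W)) = sin (w * t)" "cos (w * (t + W)) = cos (w * t)"
    unfolding distrib_left m sin_add cos_add cos_int2pi sin_int2pi by simp_all
  then show ?thesis unfolding helix_def hmul_def using assms(2) by (simp add: algebra_simps)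
qed

definition Lc :: "real \<Rightarrow> real \<Rightarrow> real \<Rightarrow> real \<Rightarrow> real set" where
  "Lc A B E z = mag_lengths A B E {hexp 0 0 z}"

lemma helix_mem:
  assumes "E > 0" "A * (R * w)^2 + (k + R^2 * w / 2)^2 = E^2"
    "R = 0 \<or> A * w = B - (k + R^2 * w / 2)"
    "W > 0" "R = 0 \<or> (\<exists>m::int. w * W = of_int m * 2 * pi)" "k * W = z"
  shows "E * W \<in> Lc A B E z"
  unfolding Lc_def mag_lengths_def
  using helix_geo[OF assms(1-3)] helix_per[OF assms(5,6)] assms(4) by blast

lemma vert_mem:
  assumes "E > 0" "z \<noteq> 0"
  shows "\<bar>z\<bar> \<in> Lc A B E z"
proof -
  have "E * (\<bar>z\<bar> / E) \<in> Lc A B E z"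
  proof (rule helix_mem[of E A 0 0 "sgn z * E"])
    show "A * (0 * 0)^2 + (sgn z * E + 0^2 * 0 / 2)^2 = E^2" using assms by (simp add: power_mult_distrib sgn_if)
    show "sgn z * E * (\<bar>z\<bar> / E) = z" using assms by (simp add: sgn_mult_abs)
  qed (use assms in auto)
  then show ?thesis using assms by simp
qed

lemma helix1_mem:
  assumes A: "A > 0" and EB: "E > \<bar>B\<bar>" and z: "z \<noteq> 0"
    and big: "\<bar>z\<bar> > pi * A + pi * A * (E^2 - B^2) / (E - \<bar>B\<bar>)^2"
  shows "\<exists>l\<in>Lc A B E z. l^2 = 4 * E^2 * (pi * A) * (\<bar>z\<bar> - pi * A) / (E^2 - B^2)"
proof -
  define u where "u = pi * A"
  define K where "K = E^2 - B^2"
  define a where "a = \<bar>z\<bar>"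
  define \<sigma> where "\<sigma> = sgn z"
  have sig: "\<sigma> = 1 \<or> \<sigma> = -1" unfolding \<sigma>_def using z by (simp add: sgn_if)
  have za: "z = \<sigma> * a" unfolding \<sigma>_def a_def by (simp add: sgn_mult_abs)
  have u: "u > 0" unfolding u_def using A by simp
  have K: "K > 0" unfolding K_def using EB by (rule EB_sq)
  have Ep: "E > 0" using EB by linarith
  have Eb: "E - \<bar>B\<bar> > 0" using EB by simp
  have "u * K / (E - \<bar>B\<bar>)^2 \<ge> 0" using u K by simp
  have au: "a - u > u * K / (E - \<bar>B\<bar>)^2" using big unfolding a_def u_def K_def by simp
  have aup: "a - u > 0" using au u K Eb by (smt (verit) divide_nonneg_pos mult_nonneg_nonneg zero_less_power)
  define q where "q = u * K / (a - u)"
  have q: "q > 0" unfolding q_def using u K aup by simp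
  have qlt: "q < (E - \<bar>B\<bar>)^2"
  proof -
    have "u * K < (a - u) * (E - \<bar>B\<bar>)^2" using au Eb by (simp add: field_simps)
    then show ?thesis unfolding q_def using aup by (simp add: field_simps)
  qed
  define d where "d = sqrt q"
  have d: "d > 0" "d^2 = q" unfolding d_def using q by auto
  have dlt: "d < E - \<bar>B\<bar>"
    using qlt d Eb by (intro power_less_imp_less_base[of d 2]) auto
  have dq: "d^2 * (a - u) = u * K" using d(2) aup unfolding q_def by simp
  define c where "c = B + \<sigma> * d"
  have cabs: "\<bar>c\<bar> < E" unfolding c_def using sig dlt d by auto
  have cE: "c^2 < E^2"
  proof -
    have "\<bar>c\<bar>^2 < E^2" using cabs by (intro power_strict_mono) auto
    then show ?thesis by simp
  qed
  define om where "om = - \<sigma> * d / A"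
  have om: "om \<noteq> 0" unfolding om_def using sig d A by auto
  define S where "S = (E^2 - c^2) / A"
  have S: "S > 0" unfolding S_def using cE A by simp
  define R where "R = sqrt S / \<bar>om\<bar>"
  have R2: "R^2 * om^2 = S" unfolding R_def using S om by (simp add: power_divide)
  define k where "k = c - R^2 * om / 2"
  have kc: "k + R^2 * om / 2 = c" unfolding k_def by simp
  define W where "W = 2 * u / d"
  have W: "W > 0" unfolding W_def using u d by simp
  have c2: "A * (R * om)^2 + (k + R^2 * om / 2)^2 = E^2"
    unfolding kc using R2 A unfolding S_def by (simp add: power_mult_distrib field_simps)
  have c3: "R = 0 \<or> A * om = B - (k + R^2 * om / 2)"
  proof -
    have "A * om = B - c" unfolding c_def om_def using A by simp
    then show ?thesis unfolding kc by simp
  qed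
  define m :: int where "m = (if \<sigma> = 1 then -1 else 1)"
  have c5: "R = 0 \<or> (\<exists>m::int. om * W = of_int m * 2 * pi)"
  proof (rule disjI2, rule exI[of _ m])
    show "om * W = of_int m * 2 * pi"
      unfolding om_def W_def m_def u_def using sig d A by auto
  qed
  have kS: "k = c - S / (2 * om)"
  proof -
    have "R^2 * om / 2 = R^2 * om^2 / (2 * om)" using om by (simp add: power2_eq_square)
    then show ?thesis unfolding k_def R2 by simp
  qed
  have c6: "k * W = z"
  proof -
    have "k * W * d^2 = \<sigma> * (u * d^2 + u * K)"
      unfolding kS S_def c_def om_def W_def K_def using sig d A
      by (auto simp: field_simps power2_eq_square)
    also have "\<dots> = \<sigma> * (u * d^2 + d^2 * (a - u))" unfolding dq ..
    also have "\<dots> = z * d^2" unfolding za by (simp add: algebra_simps)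
    finally show ?thesis using d q by auto
  qed
  have mem: "E * W \<in> Lc A B E z" by (rule helix_mem[OF Ep c2 c3 W c5 c6])
  have "(E * W)^2 = 4 * E^2 * u * (a - u) / K"
  proof -
    have "(E * W)^2 * d^2 = 4 * E^2 * u * u" unfolding W_def using d q by (simp add: field_simps power2_eq_square)
    also have "\<dots> = 4 * E^2 * u * (d^2 * (a - u)) / K" unfolding dq using K by simp
    also have "\<dots> = (4 * E^2 * u * (a - u) / K) * d^2" by (simp add: algebra_simps)
    finally have "(E * W)^2 * d^2 = (4 * E^2 * u * (a - u) / K) * d^2" .
    moreover have "d^2 \<noteq> 0" using d q by simp
    ultimately show ?thesis using mult_right_cancel by blast
  qed
  then show ?thesis using mem unfolding u_def a_def K_def by blast
qed

lemma Lc_lb: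
  assumes A: "A > 0" and EB: "E > \<bar>B\<bar>" and l: "l \<in> Lc A B E z"
    and b1: "\<bar>z\<bar> \<ge> 2 * E * (pi * A) / (E - \<bar>B\<bar>)"
    and b2: "\<bar>z\<bar> \<ge> 4 * E^2 * (pi * A) / (E^2 - B^2)"
  shows "l \<ge> 0 \<and> l^2 \<ge> 4 * E^2 * (pi * A) * (\<bar>z\<bar> - pi * A) / (E^2 - B^2)"
proof -
  have "\<exists>W. l = E * W \<and> W > 0 \<and> (\<exists>s d. d \<in> {hexp 0 0 z} \<and> mag_geodesic A B E s \<and> (\<forall>t. s (t + W) = hmul d (s t)))"
    using l unfolding Lc_def mag_lengths_def by (simp only: mem_Collect_eq)
  then obtain W s where lW: "l = E * W" and W: "W > 0" and g: "mag_geodesic A B E s"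
    and per: "\<forall>t. s (t + W) = hmul (hexp 0 0 z) (s t)"
    by auto
  have Ep: "E > 0" using EB by linarith
  have l0: "l \<ge> 0" using lW Ep W by simp
  from closed_analysis[OF A EB g W per]
  show ?thesis
  proof
    assume "E * W = \<bar>z\<bar>"
    then have "l = \<bar>z\<bar>" using lW by simp
    then show ?thesis by (simp only:) (intro conjI abs_ge_zero vert_arith[OF A EB b2])
  next
    assume "\<exists>N::nat. real N \<ge> 1 \<and> (\<exists>d. 0 < d \<and> d < E + \<bar>B\<bar> \<and> W * d = 2*pi*A*real N
      \<and> \<bar>z\<bar> = W * (d^2 + E^2 - B^2) / (2*d))"
    then obtain N :: nat and d where N: "real N \<ge> 1" and d: "0 < d" "d < E + \<bar>B\<bar>"
      and Wd: "W * d = 2*pi*A*real N" and zW: "\<bar>z\<bar> = W * (d^2 + E^2 - B^2) / (2*d)" by blast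
    note N
    from lb_arith[OF A EB this d Wd zW b1] have "(E * W)^2 \<ge> 4 * E^2 * (pi * A) * (\<bar>z\<bar> - pi * A) / (E^2 - B^2)" .
    then show ?thesis using l0 unfolding lW by blast
  qed
qed

lemma key:
  assumes A: "A > 0" and EB: "E > \<bar>B\<bar>"
  shows "\<exists>Z1. \<forall>za zb. \<bar>za\<bar> \<ge> Z1 \<longrightarrow> zb \<noteq> 0 \<longrightarrow> Lc A B E za = Lc A B E zb \<longrightarrow> \<bar>za\<bar> = \<bar>zb\<bar>"
proof -
  define u where "u = pi * A"
  define K where "K = E^2 - B^2"
  have u: "u > 0" unfolding u_def using A by simp
  have K: "K > 0" unfolding K_def using EB by (rule EB_sq)
  have Ep: "E > 0" using EB by linarith
  have Eb: "E - \<bar>B\<bar> > 0" using EB by simp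
  define q where "q = (\<lambda>x. 4 * E^2 * u * (x - u) / K)"
  have qc: "4 * E^2 * u / K > 0" using Ep u K by simp
  have qinj: "q x = q y \<Longrightarrow> x = y" for x y
  proof -
    assume "q x = q y"
    then have "(4 * E^2 * u / K) * (x - u) = (4 * E^2 * u / K) * (y - u)" unfolding q_def by simp
    then show "x = y" using qc K Ep u by auto
  qed
  define Z0 where "Z0 = max (max (2 * E * u / (E - \<bar>B\<bar>)) (4 * E^2 * u / K)) (u + u * K / (E - \<bar>B\<bar>)^2 + 1)"
  have "u * K / (E - \<bar>B\<bar>)^2 \<ge> 0" using u K by simp
  moreover have "Z0 \<ge> u + u * K / (E - \<bar>B\<bar>)^2 + 1" unfolding Z0_def by simp
  ultimately have Z0p: "Z0 > 0" using u by linarith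
  define Z1 where "Z1 = max Z0 (u + Z0^2 * K / (4 * E^2 * u))"
  have good: "\<exists>l\<in>Lc A B E z. l^2 = q \<bar>z\<bar>" and lb: "\<forall>l\<in>Lc A B E z. l \<ge> 0 \<and> l^2 \<ge> q \<bar>z\<bar>"
    if "\<bar>z\<bar> \<ge> Z0" for z
  proof -
    have "z \<noteq> 0" using that Z0p by auto
    moreover have "\<bar>z\<bar> > pi * A + pi * A * (E^2 - B^2) / (E - \<bar>B\<bar>)^2"
      using that unfolding Z0_def u_def K_def by linarith
    ultimately show "\<exists>l\<in>Lc A B E z. l^2 = q \<bar>z\<bar>"
      using helix1_mem[OF A EB] unfolding q_def u_def K_def by blast
    show "\<forall>l\<in>Lc A B E z. l \<ge> 0 \<and> l^2 \<ge> q \<bar>z\<bar>"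
    proof
      fix l assume "l \<in> Lc A B E z"
      moreover have "\<bar>z\<bar> \<ge> 2 * E * (pi * A) / (E - \<bar>B\<bar>)" "\<bar>z\<bar> \<ge> 4 * E^2 * (pi * A) / (E^2 - B^2)"
        using that unfolding Z0_def u_def K_def by linarith+
      ultimately show "l \<ge> 0 \<and> l^2 \<ge> q \<bar>z\<bar>" using Lc_lb[OF A EB] unfolding q_def u_def K_def by blast
    qed
  qed
  show ?thesis
  proof (rule exI[of _ Z1], intro allI impI)
    fix za zb assume za: "\<bar>za\<bar> \<ge> Z1" and zb: "zb \<noteq> 0" and L: "Lc A B E za = Lc A B E zb"
    have za0: "\<bar>za\<bar> \<ge> Z0" using za unfolding Z1_def by simp
    have za1: "\<bar>za\<bar> \<ge> u + Z0^2 * K / (4 * E^2 * u)" using za unfolding Z1_def by simp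
    have "q \<bar>za\<bar> \<ge> Z0^2"
    proof -
      have "\<bar>za\<bar> - u \<ge> Z0^2 * K / (4 * E^2 * u)" using za1 by simp
      then have "(\<bar>za\<bar> - u) * (4 * E^2 * u) \<ge> Z0^2 * K" using Ep u by (simp add: field_simps)
      then show ?thesis unfolding q_def using K by (simp add: field_simps)
    qed
    moreover have "\<bar>zb\<bar> \<in> Lc A B E za" unfolding L by (rule vert_mem[OF Ep zb])
    then have "\<bar>zb\<bar>^2 \<ge> q \<bar>za\<bar>" using lb[OF za0] by blast
    ultimately have "Z0^2 \<le> \<bar>zb\<bar>^2" by linarith
    then have zb0: "\<bar>zb\<bar> \<ge> Z0" by (rule power2_le_imp_le) simp
    obtain la where la: "la \<in> Lc A B E za" "la^2 = q \<bar>za\<bar>" using good[OF za0] by blast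
    obtain lb' where lb': "lb' \<in> Lc A B E zb" "lb'^2 = q \<bar>zb\<bar>" using good[OF zb0] by blast
    have "la \<in> Lc A B E zb" using la L by simp
    then have "la^2 \<ge> q \<bar>zb\<bar>" using lb[OF zb0] by blast
    then have 1: "q \<bar>za\<bar> \<ge> q \<bar>zb\<bar>" using la by simp
    have "lb' \<in> Lc A B E za" using lb' L by simp
    then have "lb'^2 \<ge> q \<bar>za\<bar>" using lb[OF za0] by blast
    then have 2: "q \<bar>zb\<bar> \<ge> q \<bar>za\<bar>" using lb' by simp
    from 1 2 have "q \<bar>za\<bar> = q \<bar>zb\<bar>" by simp
    then show "\<bar>za\<bar> = \<bar>zb\<bar>" by (rule qinj)
  qed
qed



lemma hexp_eta: "hexp (p$1) (p$2) (p$3) = p"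
  unfolding vec_eq_iff by (intro allI, rule_tac i=i in three_cases) simp_all

lemma vec3_eq: "(p::heis) = q \<longleftrightarrow> p$1 = q$1 \<and> p$2 = q$2 \<and> p$3 = q$3"
  by (simp only: vec_eq_iff all3)

lemma hexp_000: "hexp 0 0 0 = 0"
  by (simp add: vec3_eq)

lemma hcenter_iff: "c \<in> hcenter \<longleftrightarrow> c$1 = 0 \<and> c$2 = 0"
proof
  assume "c \<in> hcenter"
  then have h: "hmul c h = hmul h c" for h unfolding hcenter_def by blast
  from h[of "hexp 1 0 0"] have "c$2 = 0" by (simp add: vec3_eq)
  moreover from h[of "hexp 0 1 0"] have "c$1 = 0" by (simp add: vec3_eq)
  ultimately show "c$1 = 0 \<and> c$2 = 0" by simp
next
  assume "c$1 = 0 \<and> c$2 = 0"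
  then show "c \<in> hcenter" unfolding hcenter_def by (simp add: vec3_eq)
qed

lemma hexp_center: "hexp 0 0 w \<in> hcenter"
  by (simp add: hcenter_iff)

lemma hmul_center: "hmul (hexp 0 0 a) (hexp 0 0 b) = hexp 0 0 (a + b)"
  by (simp add: vec3_eq)

lemma conj_center: "0 \<in> G \<Longrightarrow> conj_class G (hexp 0 0 w) = {hexp 0 0 w}"
  unfolding conj_class_def hinv_def by (auto simp: vec3_eq algebra_simps)

lemma div_cancel_helper: "s \<noteq> 0 \<Longrightarrow> X / s * s = (X::real)" by simp

lemma comm_center:
  assumes L: "heis_lattice G" and c: "c \<in> G" and comm: "\<forall>h\<in>G. hmul c h = hmul h c"
  shows "c \<in> hcenter"
proof (rule ccontr)
  assume nc: "c \<notin> hcenter"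
  have rel: "c$1 * h$2 = h$1 * c$2" if "h \<in> G" for h
    using comm that by (auto simp: vec3_eq)
  obtain K where K: "compact K" and cov: "(\<Union>g\<in>G. hmul g ` K) = UNIV"
    using L unfolding heis_lattice_def by blast
  obtain M where M: "\<forall>k\<in>K. norm k \<le> M" using compact_imp_bounded[OF K] bounded_iff by blast
  define a where "a = c$1"
  define b where "b = c$2"
  have ab: "a^2 + b^2 > 0" using nc unfolding hcenter_iff a_def b_def
    by (auto simp: sum_power2_gt_zero_iff)
  define t where "t = ((\<bar>a\<bar> + \<bar>b\<bar>) * M + 1) / (a^2 + b^2)"
  define p where "p = hexp (- b * t) (a * t) 0"
  have "p \<in> (\<Union>g\<in>G. hmul g ` K)" using cov by simp
  then obtain g k where g: "g \<in> G" and k: "k \<in> K" and pk: "p = hmul g k" by blast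
  have p1: "- b * t = g$1 + k$1" and p2: "a * t = g$2 + k$2" using pk unfolding p_def by (simp_all add: vec3_eq)
  have "a * (a * t) - b * (- b * t) = t * (a^2 + b^2)" by (simp add: power2_eq_square algebra_simps)
  also have "\<dots> = (\<bar>a\<bar> + \<bar>b\<bar>) * M + 1" unfolding t_def using ab by (intro div_cancel_helper) linarith
  finally have e1: "a * (a * t) - b * (- b * t) = (\<bar>a\<bar> + \<bar>b\<bar>) * M + 1" .
  have "a * (a * t) - b * (- b * t) = (a * g$2 - g$1 * b) + (a * k$2 - b * k$1)"
    unfolding p1 p2 by (simp add: algebra_simps)
  also have "a * g$2 - g$1 * b = 0" using rel[OF g] unfolding a_def b_def by simp
  finally have e2: "a * (a * t) - b * (- b * t) = a * k$2 - b * k$1" by simp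
  have k1: "\<bar>k$1\<bar> \<le> M" and k2: "\<bar>k$2\<bar> \<le> M" using M k component_le_norm_cart[of k] by (meson order_trans)+
  have "\<bar>a * k$2 - b * k$1\<bar> \<le> \<bar>a\<bar> * \<bar>k$2\<bar> + \<bar>b\<bar> * \<bar>k$1\<bar>" by (simp add: abs_mult[symmetric] abs_triangle_ineq4)
  also have "\<dots> \<le> \<bar>a\<bar> * M + \<bar>b\<bar> * M" using k1 k2 by (intro add_mono mult_left_mono) auto
  finally have "\<bar>a * k$2 - b * k$1\<bar> \<le> (\<bar>a\<bar> + \<bar>b\<bar>) * M" by (simp add: algebra_simps)
  then show False using e1 e2 by simp
qed

lemma hmul00: "hmul 0 0 = 0" by (simp add: vec3_eq)

lemma iso_zero:
  assumes iso: "heis_group_iso G1 G2 f" and L1: "heis_lattice G1"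
  shows "f 0 = 0"
proof -
  have z: "0 \<in> G1" using L1 unfolding heis_lattice_def by blast
  have "f 0 = hmul (f 0) (f 0)" using iso z unfolding heis_group_iso_def by (metis hmul00)
  then show ?thesis by (simp add: vec3_eq)
qed

lemma iso_center:
  assumes iso: "heis_group_iso G1 G2 f" and L2: "heis_lattice G2"
    and c: "c \<in> G1" "c \<in> hcenter"
  shows "f c \<in> G2 \<inter> hcenter"
proof -
  have bij: "bij_betw f G1 G2" and hom: "\<forall>a\<in>G1. \<forall>b\<in>G1. f (hmul a b) = hmul (f a) (f b)"
    using iso unfolding heis_group_iso_def by auto
  have fc: "f c \<in> G2" using bij c(1) bij_betwE by blast
  have "\<forall>h\<in>G2. hmul (f c) h = hmul h (f c)"
  proof
    fix h assume "h \<in> G2"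
    then obtain h0 where h0: "h0 \<in> G1" "h = f h0" using bij unfolding bij_betw_def by blast
    have "hmul c h0 = hmul h0 c" using c(2) unfolding hcenter_def by blast
    then show "hmul (f c) h = hmul h (f c)" using hom c(1) h0 by metis
  qed
  then show ?thesis using comm_center[OF L2 fc] fc by blast
qed

lemma iso_center_inv:
  assumes iso: "heis_group_iso G1 G2 f" and L1: "heis_lattice G1" and L2: "heis_lattice G2"
    and c: "c' \<in> G2" "c' \<in> hcenter"
  shows "\<exists>c\<in>G1 \<inter> hcenter. f c = c'"
proof -
  have bij: "bij_betw f G1 G2" and hom: "\<forall>a\<in>G1. \<forall>b\<in>G1. f (hmul a b) = hmul (f a) (f b)"
    using iso unfolding heis_group_iso_def by auto
  obtain c0 where c0: "c0 \<in> G1" "f c0 = c'" using bij c(1) unfolding bij_betw_def by blast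
  have cl: "\<forall>a\<in>G1. \<forall>b\<in>G1. hmul a b \<in> G1" using L1 unfolding heis_lattice_def by blast
  have inj: "inj_on f G1" using bij unfolding bij_betw_def by blast
  have "\<forall>h\<in>G1. hmul c0 h = hmul h c0"
  proof
    fix h assume h: "h \<in> G1"
    have "f (hmul c0 h) = hmul c' (f h)" using hom c0 h by metis
    also have "\<dots> = hmul (f h) c'" using c(2) unfolding hcenter_def by blast
    also have "\<dots> = f (hmul h c0)" using hom c0 h by metis
    finally show "hmul c0 h = hmul h c0" using inj cl c0(1) h by (meson inj_onD)
  qed
  then show ?thesis using comm_center[OF L1 c0(1)] c0 by blast
qed

theorem lemma4p20:
  fixes A B E z1 z2 :: real and G1 G2 :: "heis set"
  assumes "A > 0"
    and "heis_lattice G1" and "heis_lattice G2"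
    and "E > \<bar>B\<bar>"
    and "same_marked_mag_spectrum A B E G1 G2"
    and "G1 \<inter> hcenter = {hexp 0 0 (of_int k * z1) | k :: int. True}"
    and "G2 \<inter> hcenter = {hexp 0 0 (of_int k * z2) | k :: int. True}"
  shows "\<bar>z1\<bar> = \<bar>z2\<bar>"
proof -
  note A = assms(1) and L1 = assms(2) and L2 = assms(3) and EB = assms(4)
    and C1 = assms(6) and C2 = assms(7)
  obtain f where iso: "heis_group_iso G1 G2 f" and spec: "\<forall>g\<in>G1. g \<noteq> 0 \<longrightarrow>
         mag_lengths A B E (conj_class G2 (f g)) = mag_lengths A B E (conj_class G1 g)"
    using assms(5) unfolding same_marked_mag_spectrum_def by blast
  have bij: "bij_betw f G1 G2" and hom: "\<forall>a\<in>G1. \<forall>b\<in>G1. f (hmul a b) = hmul (f a) (f b)"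
    using iso unfolding heis_group_iso_def by auto
  have inj: "inj_on f G1" using bij unfolding bij_betw_def by blast
  have f0: "f 0 = 0" by (rule iso_zero[OF iso L1])
  have G10: "0 \<in> G1" and G20: "0 \<in> G2" using L1 L2 unfolding heis_lattice_def by blast+
  have mem1: "hexp 0 0 (of_int k * z1) \<in> G1" for k
  proof -
    have "hexp 0 0 (of_int k * z1) \<in> G1 \<inter> hcenter" unfolding C1 by blast
    then show ?thesis by blast
  qed
  have img: "\<exists>j::int. f (hexp 0 0 (of_int k * z1)) = hexp 0 0 (of_int j * z2)" for k
  proof -
    have "f (hexp 0 0 (of_int k * z1)) \<in> G2 \<inter> hcenter"
      by (rule iso_center[OF iso L2 mem1 hexp_center])
    then show ?thesis unfolding C2 by blast
  qed
  have "hexp 0 0 (of_int 1 * z2) \<in> G2 \<inter> hcenter" unfolding C2 by blast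
  then obtain c where "c \<in> G1 \<inter> hcenter" and fc: "f c = hexp 0 0 z2"
    using iso_center_inv[OF iso L1 L2] by force
  then obtain n :: int where n: "f (hexp 0 0 (of_int n * z1)) = hexp 0 0 z2" unfolding C1 by blast
  show ?thesis
  proof (cases "z1 = 0")
    case True
    then have "hexp 0 0 z2 = 0" using n f0 hexp_000 by simp
    then have "z2 = 0" by (simp add: vec3_eq)
    then show ?thesis using True by simp
  next
    case z1: False
    have z2: "z2 \<noteq> 0"
    proof
      assume "z2 = 0"
      then obtain j where "f (hexp 0 0 (of_int 1 * z1)) = hexp 0 0 (of_int j * z2)" using img by blast
      then have "f (hexp 0 0 (of_int 1 * z1)) = f 0" using \<open>z2 = 0\<close> f0 hexp_000 by simp
      then have "hexp 0 0 (of_int 1 * z1) = 0" using inj mem1 G10 by (meson inj_onD)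
      then show False using z1 by (simp add: vec3_eq)
    qed
    obtain m :: int where m: "f (hexp 0 0 (of_int 1 * z1)) = hexp 0 0 (of_int m * z2)" using img by blast
    have hk: "f (hexp 0 0 (of_int k * z1)) = hexp 0 0 (of_int k * of_int m * z2)" for k :: int
    proof (induction k rule: int_induct[where k = 0])
      case base
      show ?case using f0 hexp_000 by simp
    next
      case (step1 i)
      have "hexp 0 0 (of_int (i + 1) * z1) = hmul (hexp 0 0 (of_int i * z1)) (hexp 0 0 (of_int 1 * z1))"
        by (simp add: hmul_center algebra_simps)
      then have "f (hexp 0 0 (of_int (i + 1) * z1)) = hmul (f (hexp 0 0 (of_int i * z1))) (f (hexp 0 0 (of_int 1 * z1)))"
        using hom mem1 by metis
      also have "\<dots> = hexp 0 0 (of_int (i + 1) * of_int m * z2)" unfolding step1.IH m hmul_center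
        by (simp add: algebra_simps)
      finally show ?case .
    next
      case (step2 i)
      obtain j where j: "f (hexp 0 0 (of_int (i - 1) * z1)) = hexp 0 0 (of_int j * z2)" using img by blast
      have "hexp 0 0 (of_int i * z1) = hmul (hexp 0 0 (of_int (i - 1) * z1)) (hexp 0 0 (of_int 1 * z1))"
        by (simp add: hmul_center algebra_simps)
      then have "f (hexp 0 0 (of_int i * z1)) = hmul (f (hexp 0 0 (of_int (i - 1) * z1))) (f (hexp 0 0 (of_int 1 * z1)))"
        using hom mem1 by metis
      then have "hexp 0 0 (of_int i * of_int m * z2) = hexp 0 0 (of_int j * z2 + of_int m * z2)"
        unfolding step2.IH j m hmul_center .
      then have "of_int i * of_int m * z2 = of_int j * z2 + of_int m * z2" by (simp add: vec3_eq)
      then have "of_int j * z2 = of_int (i - 1) * of_int m * z2" by (simp add: algebra_simps)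
      then show ?case using j by (simp only:)
    qed
    have "hexp 0 0 z2 = hexp 0 0 (of_int n * of_int m * z2)" using n hk[of n] by simp
    then have "z2 = of_int n * of_int m * z2" by (simp add: vec3_eq)
    then have "(of_int (n * m) :: real) = 1" using z2 by simp
    then have "n * m = 1" by linarith
    then have m1: "\<bar>of_int m :: real\<bar> = 1" using zmult_eq_1_iff[of n m] by auto
    obtain Z1 where Z1: "\<forall>za zb. \<bar>za\<bar> \<ge> Z1 \<longrightarrow> zb \<noteq> 0 \<longrightarrow> Lc A B E za = Lc A B E zb \<longrightarrow> \<bar>za\<bar> = \<bar>zb\<bar>"
      using key[OF A EB] by blast
    obtain k0 :: nat where k0: "Z1 / \<bar>z1\<bar> < real k0" using reals_Archimedean2 by blast
    define k :: nat where "k = max 1 k0"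
    have k1: "real k \<ge> 1" unfolding k_def by simp
    have kbig: "real k * \<bar>z1\<bar> \<ge> Z1"
    proof -
      have "Z1 / \<bar>z1\<bar> \<le> real k" using k0 unfolding k_def by linarith
      then show ?thesis using z1 by (simp add: field_simps)
    qed
    define g where "g = hexp 0 0 (of_int (int k) * z1)"
    have gG: "g \<in> G1" unfolding g_def by (rule mem1)
    have gnz: "g \<noteq> 0" unfolding g_def using z1 k1 by (simp add: vec3_eq)
    have fg: "f g = hexp 0 0 (of_int (int k) * of_int m * z2)" unfolding g_def by (rule hk)
    have "mag_lengths A B E (conj_class G2 (f g)) = mag_lengths A B E (conj_class G1 g)"
      using spec gG gnz by blast
    moreover have "conj_class G2 (f g) = {hexp 0 0 (of_int (int k) * of_int m * z2)}"
      unfolding fg by (rule conj_center[OF G20])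
    moreover have "conj_class G1 g = {hexp 0 0 (of_int (int k) * z1)}"
      unfolding g_def by (rule conj_center[OF G10])
    ultimately have LL: "Lc A B E (of_int (int k) * z1) = Lc A B E (of_int (int k) * of_int m * z2)"
      unfolding Lc_def by simp
    have zbnz: "of_int (int k) * of_int m * z2 \<noteq> 0" using k1 m1 z2 by auto
    have "\<bar>of_int (int k) * z1\<bar> \<ge> Z1" using kbig by (simp add: abs_mult)
    then have "\<bar>of_int (int k) * z1\<bar> = \<bar>of_int (int k) * of_int m * z2\<bar>" using Z1 zbnz LL by blast
    then have "real k * \<bar>z1\<bar> = real k * \<bar>z2\<bar>" using m1 by (simp add: abs_mult)
    then show ?thesis using k1 by simp
  qed
qed

end
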